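(* All $s$-derangement polynomials are $\gamma$-nonnegative: for every sequence of positive integers $s=(s_1,\ldots,s_n)$ there are nonnegative reals $\gamma_0,\ldots,\gamma_{\lfloor (n+1)/2\rfloor}$ with \[ d_n^s(z)=\sum_{i=0}^{\lfloor (n+1)/2\rfloor}\gamma_i z^i(1+z)^{n+1-2i}. \]
   Context: $P_n^s=\{x\in\mathbb{R}^n:0\le x_1/s_1\le\cdots\le x_n/s_n\le1\}$ and $d_n^s(z)=\ell^\ast(P_n^s;z)$, where for a lattice $d$-simplex $\Delta=\mathrm{conv}(v^{(0)},\ldots,v^{(d)})\subset\mathbb{R}^n$, $\ell^\ast(\Delta;z)=\sum_{x\in\Pi^\circ_\Delta\cap\mathbb{Z}^{n+1}}z^{x_{n+1}}$, $\Pi^\circ_\Delta=\{\sum_i\lambda_i(v^{(i)},1):0<\lambda_i<1\}$. A polynomial is $\gamma$-nonnegative with respect to degree $d$ if it can be written as $\sum_{i=0}^{\lfloor d/2\rfloor}\gamma_iz^i(z+1)^{d-2i}$ with all $\gamma_i\ge0$; here $d=n+1=\dim P_n^s+1$. *)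

theory Defs
  imports "HOL-Analysis.Analysis" "HOL-Computational_Algebra.Polynomial"
begin

text \<open>Points of R^n are represented as functions nat => real, coordinate x_(j+1) being
  stored at index j (j < n); indices >= n are ignored for points of R^n.
  Points of R^(n+1) use index n for the last ("height") coordinate and are 0 beyond.\<close>

definition lift :: "nat \<Rightarrow> (nat \<Rightarrow> real) \<Rightarrow> (nat \<Rightarrow> real)" where
  "lift n v = (\<lambda>j. if j < n then v j else if j = n then 1 else 0)"

definition open_parallelepiped ::
  "nat \<Rightarrow> nat \<Rightarrow> (nat \<Rightarrow> nat \<Rightarrow> real) \<Rightarrow> (nat \<Rightarrow> real) set" where
  "open_parallelepiped n d v =
     {y. \<exists>c::nat \<Rightarrow> real. (\<forall>i\<le>d. 0 < c i \<and> c i < 1) \<and>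
           y = (\<lambda>j. \<Sum>i\<le>d. c i * lift n (v i) j)}"

definition lattice_pts :: "nat \<Rightarrow> (nat \<Rightarrow> real) set" where
  "lattice_pts n = {y. (\<forall>j\<le>n. y j \<in> \<int>) \<and> (\<forall>j>n. y j = 0)}"

definition ell_star :: "nat \<Rightarrow> nat \<Rightarrow> (nat \<Rightarrow> nat \<Rightarrow> real) \<Rightarrow> real poly" where
  "ell_star n d v =
     (\<Sum>y\<in>open_parallelepiped n d v \<inter> lattice_pts n. monom 1 (nat \<lfloor>y n\<rfloor>))"

text \<open>Vertices of P_n^s = {x : 0 <= x_1/s_1 <= ... <= x_n/s_n <= 1}:
  vertex k (k = 0..n) has x_i = 0 for i <= k and x_i = s_i for i > k.\<close>
definition Ps_vertex :: "nat list \<Rightarrow> nat \<Rightarrow> nat \<Rightarrow> real" where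
  "Ps_vertex s k j = (if k \<le> j \<and> j < length s then real (s ! j) else 0)"

definition s_derangement :: "nat list \<Rightarrow> real poly" where
  "s_derangement s = ell_star (length s) (length s) (Ps_vertex s)"

definition gamma_nonneg :: "nat \<Rightarrow> real poly \<Rightarrow> bool" where
  "gamma_nonneg d p \<longleftrightarrow> (\<exists>\<gamma>::nat \<Rightarrow> real. (\<forall>i. 0 \<le> \<gamma> i) \<and>
     p = (\<Sum>i\<le>d div 2. smult (\<gamma> i) ([:0, 1:] ^ i * [:1, 1:] ^ (d - 2 * i))))"

end

theory Submission
  imports Defs
begin

abbreviation "pX \<equiv> [:0, 1:] :: real poly"
abbreviation "pY \<equiv> [:1, 1:] :: real poly"

lemma gamma_zero: "gamma_nonneg d 0"
  unfolding gamma_nonneg_def by (rule exI[of _ "\<lambda>_. 0"]) simp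

lemma gamma_one: "gamma_nonneg 0 1"
  unfolding gamma_nonneg_def by (rule exI[of _ "\<lambda>_. 1"]) simp

lemma gamma_add:
  assumes "gamma_nonneg d p" "gamma_nonneg d q"
  shows "gamma_nonneg d (p + q)"
proof -
  obtain g1 where g1: "\<forall>i. 0 \<le> g1 i" "p = (\<Sum>i\<le>d div 2. smult (g1 i) ([:0, 1:] ^ i * [:1, 1:] ^ (d - 2 * i)))"
    using assms(1) unfolding gamma_nonneg_def by blast
  obtain g2 where g2: "\<forall>i. 0 \<le> g2 i" "q = (\<Sum>i\<le>d div 2. smult (g2 i) ([:0, 1:] ^ i * [:1, 1:] ^ (d - 2 * i)))"
    using assms(2) unfolding gamma_nonneg_def by blast
  show ?thesis unfolding gamma_nonneg_def
    by (rule exI[of _ "\<lambda>i. g1 i + g2 i"]) (simp add: g1 g2 add_nonneg_nonneg sum.distrib smult_add_left)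
qed

lemma smult_sum_right: "smult c (sum f S) = (\<Sum>i\<in>S. smult c (f i))"
  by (induction S rule: infinite_finite_induct) (auto simp: smult_add_right)

lemma gamma_smult:
  assumes "gamma_nonneg d p" "0 \<le> c"
  shows "gamma_nonneg d (smult c p)"
proof -
  obtain g1 where g1: "\<forall>i. 0 \<le> g1 i" "p = (\<Sum>i\<le>d div 2. smult (g1 i) ([:0, 1:] ^ i * [:1, 1:] ^ (d - 2 * i)))"
    using assms(1) unfolding gamma_nonneg_def by blast
  show ?thesis unfolding gamma_nonneg_def
    by (rule exI[of _ "\<lambda>i. c * g1 i"]) (simp add: g1 assms(2) smult_sum_right)
qed

lemma gamma_sum:
  assumes "\<And>i. i \<in> I \<Longrightarrow> gamma_nonneg d (f i)"
  shows "gamma_nonneg d (\<Sum>i\<in>I. f i)"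
  using assms
proof (induction I rule: infinite_finite_induct)
  case (infinite A) then show ?case by (simp add: gamma_zero)
next
  case empty then show ?case by (simp add: gamma_zero)
next
  case (insert x F) then show ?case by (simp add: gamma_add)
qed

lemma gamma_Y:
  assumes "gamma_nonneg d p"
  shows "gamma_nonneg (Suc d) (pY * p)"
proof -
  obtain g1 where g1: "\<forall>i. 0 \<le> g1 i" "p = (\<Sum>i\<le>d div 2. smult (g1 i) ([:0, 1:] ^ i * [:1, 1:] ^ (d - 2 * i)))"
    using assms(1) unfolding gamma_nonneg_def by blast
  define g where "g = (\<lambda>i. if i \<le> d div 2 then g1 i else 0)"
  have "pY * p = (\<Sum>i\<le>d div 2. smult (g1 i) ([:0, 1:] ^ i * [:1, 1:] ^ (Suc d - 2 * i)))"
    unfolding g1(2) sum_distrib_left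
  proof (rule sum.cong[OF refl])
    fix i assume "i \<in> {..d div 2}"
    then have "Suc d - 2 * i = Suc (d - 2 * i)" by auto
    then show "pY * smult (g1 i) (pX ^ i * pY ^ (d - 2 * i)) = smult (g1 i) (pX ^ i * pY ^ (Suc d - 2 * i))"
      by (simp only: power_Suc mult_smult_right mult.left_commute)
  qed
  also have "\<dots> = (\<Sum>i\<le>Suc d div 2. smult (g i) ([:0, 1:] ^ i * [:1, 1:] ^ (Suc d - 2 * i)))"
    by (rule sum.mono_neutral_cong_left) (auto simp: g_def)
  finally show ?thesis unfolding gamma_nonneg_def
    by (intro exI[of _ g]) (auto simp: g_def g1(1))
qed

lemma gamma_X:
  assumes "gamma_nonneg d p"
  shows "gamma_nonneg (Suc (Suc d)) (pX * p)"
proof -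
  obtain g1 where g1: "\<forall>i. 0 \<le> g1 i" "p = (\<Sum>i\<le>d div 2. smult (g1 i) ([:0, 1:] ^ i * [:1, 1:] ^ (d - 2 * i)))"
    using assms(1) unfolding gamma_nonneg_def by blast
  define g where "g = (\<lambda>i. if i = 0 then 0 else g1 (i - 1))"
  have "(\<Sum>i\<le>Suc (Suc d) div 2. smult (g i) ([:0, 1:] ^ i * [:1, 1:] ^ (Suc (Suc d) - 2 * i)))
     = (\<Sum>i\<le>Suc (d div 2). smult (g i) ([:0, 1:] ^ i * [:1, 1:] ^ (Suc (Suc d) - 2 * i)))"
    by simp
  also have "\<dots> = (\<Sum>i\<le>d div 2. smult (g1 i) ([:0, 1:] ^ Suc i * [:1, 1:] ^ (d - 2 * i)))"
    by (subst sum.atMost_Suc_shift) (simp add: g_def)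
  also have "\<dots> = pX * p"
    unfolding g1(2) sum_distrib_left by (simp add: mult_ac)
  finally show ?thesis unfolding gamma_nonneg_def
    by (intro exI[of _ g]) (auto simp: g_def g1(1))
qed


definition zX :: "real poly" where "zX = [:0, 1:]"

lemma gamma_zX:
  assumes "gamma_nonneg d p"
  shows "gamma_nonneg (Suc (Suc d)) (zX * p)"
  using gamma_X[OF assms] by (simp add: zX_def)

lemma one_plus_zX: "1 + zX = pY"
  by (simp add: zX_def one_pCons)

lemma gamma_Y':
  assumes "gamma_nonneg d p"
  shows "gamma_nonneg (Suc d) ((1 + zX) * p)"
  using gamma_Y[OF assms] by (simp add: one_plus_zX)

definition grid :: "nat \<Rightarrow> real set" where
  "grid t = {w. 0 \<le> w \<and> w < 1 \<and> w * real t \<in> \<int>}"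

definition pgrid :: "(nat \<Rightarrow> nat) \<Rightarrow> nat \<Rightarrow> real set" where
  "pgrid sv k = (if k = 0 then {0} else grid (sv (k - 1)))"

definition kap :: "real \<Rightarrow> real \<Rightarrow> real poly" where
  "kap v w = (if v < w then 1 else if w < v then zX else 0)"

primrec Ap :: "(nat \<Rightarrow> nat) \<Rightarrow> nat \<Rightarrow> real \<Rightarrow> real poly" where
  "Ap sv 0 w = (if w = 0 then 1 else 0)"
| "Ap sv (Suc k) w = (if w \<in> grid (sv k) then (\<Sum>v\<in>pgrid sv k. kap v w * Ap sv k v) else 0)"

lemma finite_grid:
  assumes "0 < t"
  shows "finite (grid t)"
proof -
  have "grid t \<subseteq> (\<lambda>m. real m / real t) ` {..<t}"
  proof
    fix w assume "w \<in> grid t"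
    then have w: "0 \<le> w" "w < 1" "w * real t \<in> \<int>" by (auto simp: grid_def)
    then obtain m where m: "w * real t = of_int m" by (auto elim: Ints_cases)
    have "0 \<le> w * real t" using w by simp
    then have "0 \<le> m" using m by simp
    have "w * real t < real t" using w assms by simp
    then have "m < int t" using m by linarith
    have "w = real (nat m) / real t" using m assms \<open>0 \<le> m\<close> by (simp add: field_simps)
    then show "w \<in> (\<lambda>m. real m / real t) ` {..<t}"
      using \<open>m < int t\<close> \<open>0 \<le> m\<close> by (intro image_eqI[of _ _ "nat m"]) auto
  qed
  then show ?thesis by (rule finite_subset) simp
qed

lemma zero_in_grid: "0 \<in> grid t"
  by (simp add: grid_def)

lemma grid_sym:
  assumes "0 < u" "u < 1"
  shows "(1 - u \<in> grid t) = (u \<in> grid t)"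
proof -
  have "(1 - u) * real t = real t - u * real t" by (simp add: algebra_simps)
  moreover have "u * real t = real t - (1 - u) * real t" by (simp add: algebra_simps)
  ultimately have "((1 - u) * real t \<in> \<int>) = (u * real t \<in> \<int>)"
    by (metis Ints_diff Ints_of_nat)
  then show ?thesis using assms by (auto simp: grid_def)
qed

lemma sum_split_sym:
  fixes f :: "real \<Rightarrow> 'a::comm_monoid_add"
  assumes fin: "finite G" and z: "0 \<in> G" and rng: "\<forall>v\<in>G. 0 \<le> v \<and> v < 1"
    and sym: "\<forall>v\<in>G. 0 < v \<longrightarrow> 1 - v \<in> G"
  shows "(\<Sum>v\<in>G. f v) = f 0 + (if (1/2::real) \<in> G then f (1/2) else 0)
           + (\<Sum>v\<in>{v\<in>G. 0 < v \<and> v < 1/2}. f v + f (1 - v))"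
proof -
  define H where "H = {v\<in>G. 0 < v \<and> v < 1/2}"
  define M where "M = {v\<in>G. v = 1/2}"
  define H' where "H' = {v\<in>G. 1/2 < v}"
  have G0: "G - {0} = H \<union> (M \<union> H')" using rng by (auto simp: H_def M_def H'_def)
  have "(\<Sum>v\<in>G. f v) = f 0 + (\<Sum>v\<in>G - {0}. f v)"
    using fin z by (simp add: sum.remove)
  also have "(\<Sum>v\<in>G - {0}. f v) = (\<Sum>v\<in>H. f v) + ((\<Sum>v\<in>M. f v) + (\<Sum>v\<in>H'. f v))"
  proof -
    have fH: "finite H" "finite M" "finite H'" using fin by (auto simp: H_def M_def H'_def)
    have "(\<Sum>v\<in>M \<union> H'. f v) = (\<Sum>v\<in>M. f v) + (\<Sum>v\<in>H'. f v)"
      by (rule sum.union_disjoint) (use fH in \<open>auto simp: M_def H'_def\<close>)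
    moreover have "(\<Sum>v\<in>H \<union> (M \<union> H'). f v) = (\<Sum>v\<in>H. f v) + (\<Sum>v\<in>M \<union> H'. f v)"
      by (rule sum.union_disjoint) (use fH in \<open>auto simp: H_def M_def H'_def\<close>)
    ultimately show ?thesis unfolding G0 by simp
  qed
  also have "(\<Sum>v\<in>M. f v) = (if (1/2::real) \<in> G then f (1/2) else 0)"
  proof (cases "(1/2::real) \<in> G")
    case True then have "M = {1/2}" by (auto simp: M_def)
    then show ?thesis using True by simp
  next
    case False then have "M = {}" unfolding M_def by blast
    then show ?thesis using False by simp
  qed
  also have "H' = (\<lambda>v. 1 - v) ` H"
  proof
    show "H' \<subseteq> (\<lambda>v. 1 - v) ` H"
    proof
      fix x assume "x \<in> H'"
      then have "1 - x \<in> H" using sym rng by (auto simp: H'_def H_def)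
      then show "x \<in> (\<lambda>v. 1 - v) ` H" by (intro image_eqI[of _ _ "1 - x"]) auto
    qed
    show "(\<lambda>v. 1 - v) ` H \<subseteq> H'" using sym by (auto simp: H'_def H_def)
  qed
  then have "(\<Sum>v\<in>H'. f v) = (\<Sum>v\<in>H. f (1 - v))"
    by (simp add: sum.reindex inj_on_def)
  finally have "(\<Sum>v\<in>G. f v) = f 0 + (if (1/2::real) \<in> G then f (1/2) else 0)
           + (\<Sum>v\<in>H. f v + f (1 - v))"
    by (simp add: sum.distrib algebra_simps)
  then show ?thesis by (simp only: H_def)
qed

lemma gamma_split:
  assumes fin: "finite G" and z: "0 \<in> G" and rng: "\<forall>v\<in>G. 0 \<le> v \<and> v < 1"
    and sym: "\<forall>v\<in>G. 0 < v \<longrightarrow> 1 - v \<in> G"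
    and g0: "gamma_nonneg d (f 0)"
    and gh: "(1/2::real) \<in> G \<Longrightarrow> gamma_nonneg d (f (1/2))"
    and gp: "\<And>v. v \<in> G \<Longrightarrow> 0 < v \<Longrightarrow> v < 1/2 \<Longrightarrow> gamma_nonneg d (f v + f (1 - v))"
  shows "gamma_nonneg d (\<Sum>v\<in>G. f v)"
  unfolding sum_split_sym[OF fin z rng sym]
  apply (rule gamma_add, rule gamma_add)
    apply (rule g0)
   apply (auto intro: gh gamma_zero)[1]
  apply (rule gamma_sum)
  apply (auto intro: gp)
  done

lemma grid_props:
  assumes "0 < t"
  shows "finite (grid t)" "0 \<in> grid t" "\<forall>v\<in>grid t. 0 \<le> v \<and> v < 1"
        "\<forall>v\<in>grid t. 0 < v \<longrightarrow> 1 - v \<in> grid t"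
  using finite_grid[OF assms] zero_in_grid grid_sym by (auto simp: grid_def)


lemma Ap_gamma:
  assumes pos: "\<forall>j. 0 < sv j"
  shows "gamma_nonneg k (Ap sv k 0) \<and>
    (\<forall>u. 0 < u \<and> u < 1/2 \<longrightarrow> gamma_nonneg k (Ap sv k u + zX * Ap sv k (1 - u))) \<and>
    (\<forall>u. 0 < u \<and> u < 1/2 \<longrightarrow> gamma_nonneg (k - 1) (Ap sv k u + Ap sv k (1 - u))) \<and>
    gamma_nonneg (k - 1) (Ap sv k (1/2))"
proof (induction k)
  case 0
  show ?case by (auto simp: gamma_one gamma_zero)
next
  case (Suc k)
  show ?case
  proof (cases k)
    case 0
    have A1: "\<And>w. Ap sv (Suc 0) w = (if w \<in> grid (sv 0) then kap 0 w else 0)"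
      by (simp add: pgrid_def)
    have c1: "gamma_nonneg (Suc k) (Ap sv (Suc k) 0)"
    proof -
      have "Ap sv (Suc k) 0 = 0" using 0 A1[of 0] by (simp add: kap_def)
      then show ?thesis by (simp add: gamma_zero)
    qed
    have c2: "gamma_nonneg (Suc k) (Ap sv (Suc k) u + zX * Ap sv (Suc k) (1 - u))"
      if u: "0 < u" "u < 1/2" for u
    proof (cases "u \<in> grid (sv 0)")
      case True
      then have "1 - u \<in> grid (sv 0)" using grid_sym[of u] u by simp
      then have "Ap sv (Suc k) u + zX * Ap sv (Suc k) (1 - u) = (1 + zX) * 1"
        using True u 0 by (simp add: pgrid_def kap_def)
      then show ?thesis using 0 gamma_Y'[OF gamma_one] by simp
    next
      case False
      then have "1 - u \<notin> grid (sv 0)" using grid_sym[of u] u by simp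
      then show ?thesis using False 0 by (simp add: pgrid_def gamma_zero)
    qed
    have c3: "gamma_nonneg (Suc k - 1) (Ap sv (Suc k) u + Ap sv (Suc k) (1 - u))"
      if u: "0 < u" "u < 1/2" for u
    proof (cases "u \<in> grid (sv 0)")
      case True
      then have "1 - u \<in> grid (sv 0)" using grid_sym[of u] u by simp
      then have "Ap sv (Suc k) u + Ap sv (Suc k) (1 - u) = 1 + 1"
        using True u 0 by (simp add: pgrid_def kap_def)
      then show ?thesis using 0 gamma_add[OF gamma_one gamma_one] by simp
    next
      case False
      then have "1 - u \<notin> grid (sv 0)" using grid_sym[of u] u by simp
      then show ?thesis using False 0 by (simp add: pgrid_def gamma_zero)
    qed
    have c4: "gamma_nonneg (Suc k - 1) (Ap sv (Suc k) (1/2))"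
      using 0 by (simp add: pgrid_def kap_def gamma_zero gamma_one)
    show ?thesis using c1 c2 c3 c4 by blast
  next
    case (Suc k')
    have I1: "gamma_nonneg k (Ap sv k 0)"
      and I2: "\<And>u. 0 < u \<Longrightarrow> u < 1/2 \<Longrightarrow> gamma_nonneg k (Ap sv k u + zX * Ap sv k (1 - u))"
      and I3: "\<And>u. 0 < u \<Longrightarrow> u < 1/2 \<Longrightarrow> gamma_nonneg k' (Ap sv k u + Ap sv k (1 - u))"
      and I4: "gamma_nonneg k' (Ap sv k (1/2))"
      using Suc.IH Suc by auto
    have pg: "pgrid sv k = grid (sv k')" using Suc by (simp add: pgrid_def)
    note gp = grid_props[OF pos[rule_format, of k']]
    have kS: "Suc k = Suc (Suc k')" using Suc by simp
    have AS: "\<And>w. w \<in> grid (sv k) \<Longrightarrow> Ap sv (Suc k) w = (\<Sum>v\<in>grid (sv k'). kap v w * Ap sv k v)"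
      by (simp add: pg)
    have c1: "gamma_nonneg (Suc k) (Ap sv (Suc k) 0)"
      unfolding AS[OF zero_in_grid]
    proof (rule gamma_split[OF gp])
      show "gamma_nonneg (Suc k) (kap 0 0 * Ap sv k 0)" by (simp add: kap_def gamma_zero)
      show "gamma_nonneg (Suc k) (kap (1/2) 0 * Ap sv k (1/2))"
        unfolding kS using gamma_zX[OF I4] by (simp add: kap_def)
      fix v :: real assume v: "v \<in> grid (sv k')" "0 < v" "v < 1/2"
      have "kap v 0 * Ap sv k v + kap (1 - v) 0 * Ap sv k (1 - v) = zX * (Ap sv k v + Ap sv k (1 - v))"
        using v by (simp add: kap_def algebra_simps)
      then show "gamma_nonneg (Suc k) (kap v 0 * Ap sv k v + kap (1 - v) 0 * Ap sv k (1 - v))"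
        unfolding kS using gamma_zX[OF I3[OF v(2,3)]] by metis
    qed
    have c2: "gamma_nonneg (Suc k) (Ap sv (Suc k) u + zX * Ap sv (Suc k) (1 - u))"
      if u: "0 < u" "u < 1/2" for u
    proof (cases "u \<in> grid (sv k)")
      case False
      then have "1 - u \<notin> grid (sv k)" using grid_sym[of u] u by simp
      then show ?thesis using False by (simp add: gamma_zero)
    next
      case True
      then have T': "1 - u \<in> grid (sv k)" using grid_sym[of u] u by simp
      have "Ap sv (Suc k) u + zX * Ap sv (Suc k) (1 - u)
          = (\<Sum>v\<in>grid (sv k'). (kap v u + zX * kap v (1 - u)) * Ap sv k v)"
        unfolding AS[OF True] AS[OF T'] by (simp add: sum_distrib_left sum.distrib algebra_simps)
      also have "gamma_nonneg (Suc k) \<dots>"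
      proof (rule gamma_split[OF gp])
        have e: "kap 0 u + zX * kap 0 (1 - u) = 1 + zX"
          using u by (simp add: kap_def)
        show "gamma_nonneg (Suc k) ((kap 0 u + zX * kap 0 (1 - u)) * Ap sv k 0)"
          unfolding e by (rule gamma_Y'[OF I1])
        have "(kap (1/2) u + zX * kap (1/2) (1 - u)) * Ap sv k (1/2) = zX * (Ap sv k (1/2) + Ap sv k (1/2))"
          using u by (simp add: kap_def algebra_simps)
        then show "gamma_nonneg (Suc k) ((kap (1/2) u + zX * kap (1/2) (1 - u)) * Ap sv k (1/2))"
          unfolding kS using gamma_zX[OF gamma_add[OF I4 I4]] by metis
        fix v :: real assume v: "v \<in> grid (sv k')" "0 < v" "v < 1/2"
        consider "v < u" | "v = u" | "u < v" by linarith
        then show "gamma_nonneg (Suc k) ((kap v u + zX * kap v (1 - u)) * Ap sv k v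
              + (kap (1 - v) u + zX * kap (1 - v) (1 - u)) * Ap sv k (1 - v))"
        proof cases
          case 1
          have "(kap v u + zX * kap v (1 - u)) * Ap sv k v
              + (kap (1 - v) u + zX * kap (1 - v) (1 - u)) * Ap sv k (1 - v)
              = (1 + zX) * (Ap sv k v + zX * Ap sv k (1 - v))"
            using 1 u v by (simp add: kap_def algebra_simps)
          then show ?thesis using gamma_Y'[OF I2[OF v(2,3)]] by metis
        next
          case 2
          have "(kap v u + zX * kap v (1 - u)) * Ap sv k v
              + (kap (1 - v) u + zX * kap (1 - v) (1 - u)) * Ap sv k (1 - v)
              = zX * (Ap sv k v + Ap sv k (1 - v))"
            using 2 u v by (simp add: kap_def algebra_simps)
          then show ?thesis unfolding kS using gamma_zX[OF I3[OF v(2,3)]] by metis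
        next
          case 3
          have "(kap v u + zX * kap v (1 - u)) * Ap sv k v
              + (kap (1 - v) u + zX * kap (1 - v) (1 - u)) * Ap sv k (1 - v)
              = zX * ((Ap sv k v + Ap sv k (1 - v)) + (Ap sv k v + Ap sv k (1 - v)))"
            using 3 u v by (simp add: kap_def algebra_simps)
          then show ?thesis unfolding kS
            using gamma_zX[OF gamma_add[OF I3[OF v(2,3)] I3[OF v(2,3)]]] by metis
        qed
      qed
      finally show ?thesis .
    qed
    have c3: "gamma_nonneg (Suc k - 1) (Ap sv (Suc k) u + Ap sv (Suc k) (1 - u))"
      if u: "0 < u" "u < 1/2" for u
    proof (cases "u \<in> grid (sv k)")
      case False
      then have "1 - u \<notin> grid (sv k)" using grid_sym[of u] u by simp
      then show ?thesis using False by (simp add: gamma_zero)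
    next
      case True
      then have T': "1 - u \<in> grid (sv k)" using grid_sym[of u] u by simp
      have "Ap sv (Suc k) u + Ap sv (Suc k) (1 - u)
          = (\<Sum>v\<in>grid (sv k'). (kap v u + kap v (1 - u)) * Ap sv k v)"
        unfolding AS[OF True] AS[OF T'] by (simp add: sum.distrib algebra_simps)
      also have "gamma_nonneg (Suc k - 1) \<dots>"
        unfolding diff_Suc_1
      proof (rule gamma_split[OF gp])
        have "(kap 0 u + kap 0 (1 - u)) * Ap sv k 0 = Ap sv k 0 + Ap sv k 0"
          using u by (simp add: kap_def algebra_simps)
        then show "gamma_nonneg k ((kap 0 u + kap 0 (1 - u)) * Ap sv k 0)"
          using gamma_add[OF I1 I1] by metis
        have "(kap (1/2) u + kap (1/2) (1 - u)) * Ap sv k (1/2) = (1 + zX) * Ap sv k (1/2)"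
          using u by (simp add: kap_def algebra_simps)
        then show "gamma_nonneg k ((kap (1/2) u + kap (1/2) (1 - u)) * Ap sv k (1/2))"
          using Suc gamma_Y'[OF I4] by metis
        fix v :: real assume v: "v \<in> grid (sv k')" "0 < v" "v < 1/2"
        consider "v < u" | "v = u" | "u < v" by linarith
        then show "gamma_nonneg k ((kap v u + kap v (1 - u)) * Ap sv k v
              + (kap (1 - v) u + kap (1 - v) (1 - u)) * Ap sv k (1 - v))"
        proof cases
          case 1
          have "(kap v u + kap v (1 - u)) * Ap sv k v
              + (kap (1 - v) u + kap (1 - v) (1 - u)) * Ap sv k (1 - v)
              = (Ap sv k v + zX * Ap sv k (1 - v)) + (Ap sv k v + zX * Ap sv k (1 - v))"
            using 1 u v by (simp add: kap_def algebra_simps)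
          then show ?thesis using gamma_add[OF I2[OF v(2,3)] I2[OF v(2,3)]] by metis
        next
          case 2
          have "(kap v u + kap v (1 - u)) * Ap sv k v
              + (kap (1 - v) u + kap (1 - v) (1 - u)) * Ap sv k (1 - v)
              = Ap sv k v + zX * Ap sv k (1 - v)"
            using 2 u v by (simp add: kap_def algebra_simps)
          then show ?thesis using I2[OF v(2,3)] by metis
        next
          case 3
          have "(kap v u + kap v (1 - u)) * Ap sv k v
              + (kap (1 - v) u + kap (1 - v) (1 - u)) * Ap sv k (1 - v)
              = (1 + zX) * (Ap sv k v + Ap sv k (1 - v))"
            using 3 u v by (simp add: kap_def algebra_simps)
          then show ?thesis using Suc gamma_Y'[OF I3[OF v(2,3)]] by metis
        qed
      qed
      finally show ?thesis .
    qed
    have c4: "gamma_nonneg (Suc k - 1) (Ap sv (Suc k) (1/2))"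
    proof (cases "(1/2::real) \<in> grid (sv k)")
      case False
      then show ?thesis by (simp add: gamma_zero)
    next
      case True
      show ?thesis
        unfolding AS[OF True] diff_Suc_1
      proof (rule gamma_split[OF gp])
        show "gamma_nonneg k (kap 0 (1/2) * Ap sv k 0)" using I1 by (simp add: kap_def)
        show "gamma_nonneg k (kap (1/2) (1/2) * Ap sv k (1/2))" by (simp add: kap_def gamma_zero)
        fix v :: real assume v: "v \<in> grid (sv k')" "0 < v" "v < 1/2"
        have "kap v (1/2) * Ap sv k v + kap (1 - v) (1/2) * Ap sv k (1 - v)
            = Ap sv k v + zX * Ap sv k (1 - v)"
          using v by (simp add: kap_def)
        then show "gamma_nonneg k (kap v (1/2) * Ap sv k v + kap (1 - v) (1/2) * Ap sv k (1 - v))"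
          using I2[OF v(2,3)] by metis
      qed
    qed
    show ?thesis using c1 c2 c3 c4 by blast
  qed
qed


definition lastv :: "nat \<Rightarrow> (nat \<Rightarrow> real) \<Rightarrow> real" where
  "lastv j C = (if j = 0 then 0 else C (j - 1))"

definition Sset :: "(nat \<Rightarrow> nat) \<Rightarrow> nat \<Rightarrow> (nat \<Rightarrow> real) set" where
  "Sset sv k = {C. (\<forall>j<k. C j * real (sv j) \<in> \<int> \<and> lastv j C < C j \<and> C j < lastv j C + 1)
                   \<and> (\<forall>j\<ge>k. C j = 0)}"

definition Xs :: "nat \<Rightarrow> real \<Rightarrow> real set" where
  "Xs t h = {x. x * real t \<in> \<int> \<and> h < x \<and> x < h + 1}"

lemma finite_Xs:
  assumes "0 < t"
  shows "finite (Xs t h)"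
proof -
  have "Xs t h \<subseteq> (\<lambda>m. real_of_int m / real t) ` {\<lfloor>h * real t\<rfloor> .. \<lceil>(h + 1) * real t\<rceil>}"
  proof
    fix x assume "x \<in> Xs t h"
    then have x: "x * real t \<in> \<int>" "h < x" "x < h + 1" by (auto simp: Xs_def)
    then obtain m where m: "x * real t = of_int m" by (auto elim: Ints_cases)
    have "h * real t < x * real t" using x assms by simp
    then have "\<lfloor>h * real t\<rfloor> \<le> m" using m by linarith
    have "x * real t < (h + 1) * real t" using x assms by simp
    then have "m \<le> \<lceil>(h + 1) * real t\<rceil>" using m by linarith
    have "x = real_of_int m / real t" using m assms by (simp add: field_simps)
    then show "x \<in> (\<lambda>m. real_of_int m / real t) ` {\<lfloor>h * real t\<rfloor> .. \<lceil>(h + 1) * real t\<rceil>}"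
      using \<open>\<lfloor>h * real t\<rfloor> \<le> m\<close> \<open>m \<le> \<lceil>(h + 1) * real t\<rceil>\<close> by auto
  qed
  then show ?thesis by (rule finite_subset) simp
qed

lemma Sset_0: "Sset sv 0 = {\<lambda>_. 0}"
  by (auto simp: Sset_def)

lemma Sset_Suc:
  "Sset sv (Suc k) = (\<lambda>(C, x). C(k := x)) ` (SIGMA C:Sset sv k. Xs (sv k) (lastv k C))"
proof
  show "Sset sv (Suc k) \<subseteq> (\<lambda>(C, x). C(k := x)) ` (SIGMA C:Sset sv k. Xs (sv k) (lastv k C))"
  proof
    fix D assume D: "D \<in> Sset sv (Suc k)"
    have l1: "lastv j (D(k := 0)) = lastv j D" if "j \<le> k" for j
      using that by (auto simp: lastv_def)
    have "D(k := 0) \<in> Sset sv k"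
      using D l1 by (auto simp: Sset_def)
    moreover have "D k \<in> Xs (sv k) (lastv k (D(k := 0)))"
      using D l1[of k] by (auto simp: Sset_def Xs_def)
    ultimately show "D \<in> (\<lambda>(C, x). C(k := x)) ` (SIGMA C:Sset sv k. Xs (sv k) (lastv k C))"
      by (intro image_eqI[of _ _ "(D(k := 0), D k)"]) auto
  qed
  show "(\<lambda>(C, x). C(k := x)) ` (SIGMA C:Sset sv k. Xs (sv k) (lastv k C)) \<subseteq> Sset sv (Suc k)"
  proof clarify
    fix C x assume C: "C \<in> Sset sv k" and x: "x \<in> Xs (sv k) (lastv k C)"
    have l1: "lastv j (C(k := x)) = lastv j C" if "j \<le> k" for j
      using that by (auto simp: lastv_def)
    show "C(k := x) \<in> Sset sv (Suc k)"
      unfolding Sset_def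
    proof (intro CollectI conjI allI impI)
      fix j assume "j < Suc k"
      then consider "j < k" | "j = k" by linarith
      then show "(C(k := x)) j * real (sv j) \<in> \<int>"
        and "lastv j (C(k := x)) < (C(k := x)) j"
        and "(C(k := x)) j < lastv j (C(k := x)) + 1"
        using C x l1[of j] by (cases; auto simp: Sset_def Xs_def)+
    next
      fix j assume "Suc k \<le> j"
      then show "(C(k := x)) j = 0" using C by (auto simp: Sset_def)
    qed
  qed
qed

lemma inj_upd:
  "inj_on (\<lambda>(C, x). C(k := x)) (SIGMA C:Sset sv k. Xs (sv k) (lastv k C))"
proof (rule inj_onI, clarify)
  fix C x D y
  assume C: "C \<in> Sset sv k" and D: "D \<in> Sset sv k" and eq: "C(k := x) = D(k := y)"
  have "x = y" using fun_upd_eqD[OF eq] .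
  moreover have "C = D"
  proof
    fix j show "C j = D j"
    proof (cases "j = k")
      case True then show ?thesis using C D by (simp add: Sset_def)
    next
      case False then show ?thesis using fun_cong[OF eq, of j] by simp
    qed
  qed
  ultimately show "C = D \<and> x = y" by simp
qed

lemma finite_Sset:
  assumes pos: "\<forall>j. 0 < sv j"
  shows "finite (Sset sv k)"
proof (induction k)
  case 0 then show ?case by (simp add: Sset_0)
next
  case (Suc k)
  then show ?case unfolding Sset_Suc
    using finite_Xs pos by (intro finite_imageI finite_SigmaI) auto
qed

lemma Sset_lastv_nonneg:
  assumes "C \<in> Sset sv k"
  shows "0 \<le> lastv k C"
proof -
  have "\<forall>j\<le>k. 0 \<le> lastv j C"
  proof (intro allI impI)
    fix j show "j \<le> k \<Longrightarrow> 0 \<le> lastv j C"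
    proof (induction j)
      case 0 then show ?case by (simp add: lastv_def)
    next
      case (Suc j)
      then have "lastv j C < C j" using assms by (auto simp: Sset_def)
      then show ?case using Suc by (simp add: lastv_def)
    qed
  qed
  then show ?thesis by simp
qed

lemma frac_in_grid:
  assumes "x * real t \<in> \<int>"
  shows "frac x \<in> grid t"
proof -
  have "frac x * real t = x * real t - of_int \<lfloor>x\<rfloor> * real t" by (simp add: frac_def algebra_simps)
  also have "\<dots> \<in> \<int>" using assms by (metis Ints_diff Ints_mult Ints_of_int Ints_of_nat)
  finally show ?thesis by (simp add: grid_def frac_lt_1)
qed

lemma Sset_frac_pgrid:
  assumes "C \<in> Sset sv k"
  shows "frac (lastv k C) \<in> pgrid sv k"
proof (cases k)
  case 0 then show ?thesis by (simp add: lastv_def pgrid_def)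
next
  case (Suc k')
  then have "C k' * real (sv k') \<in> \<int>" using assms by (auto simp: Sset_def)
  then show ?thesis using Suc frac_in_grid by (simp add: lastv_def pgrid_def)
qed


lemma floor_frac_add:
  assumes "0 \<le> w" "w < 1"
  shows "\<lfloor>of_int m + w\<rfloor> = m" "frac (of_int m + w) = w"
proof -
  show "\<lfloor>of_int m + w\<rfloor> = m" using assms by (simp add: floor_eq_iff)
  then show "frac (of_int m + w) = w" by (simp add: frac_def)
qed

lemma int_between0:
  fixes m :: int
  assumes "(-1::real) < of_int m" "of_int m < (1::real)"
  shows "m = 0"
proof -
  have "-1 < m" using assms(1) by (metis of_int_less_iff of_int_minus of_int_1)
  moreover have "m < 1" using assms(2) by (metis of_int_less_iff of_int_1)
  ultimately show ?thesis by simp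
qed

lemma zX_monom: "zX * monom 1 n = monom 1 (Suc n)"
  by (simp add: zX_def monom_Suc)

lemma inner:
  assumes t: "0 < t" and h: "0 \<le> h"
  shows "(\<Sum>x\<in>Xs t h. if frac x = w then monom 1 (nat \<lfloor>x\<rfloor>) else 0)
       = (if w \<in> grid t then kap (frac h) w * monom 1 (nat \<lfloor>h\<rfloor>) else (0::real poly))"
proof -
  have fin: "finite (Xs t h)" using finite_Xs[OF t] .
  have S: "(\<Sum>x\<in>Xs t h. if frac x = w then monom 1 (nat \<lfloor>x\<rfloor>) else 0)
      = (\<Sum>x\<in>{x\<in>Xs t h. frac x = w}. monom (1::real) (nat \<lfloor>x\<rfloor>))"
    by (simp add: sum.inter_filter[OF fin])
  define v where "v = frac h"
  define k0 where "k0 = \<lfloor>h\<rfloor>"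
  have hk: "h = of_int k0 + v" by (simp add: v_def k0_def frac_def)
  have v0: "0 \<le> v" "v < 1" by (simp_all add: v_def frac_lt_1)
  have k0: "0 \<le> k0" using h by (simp add: k0_def)
  have xr: "\<And>x::real. x = of_int \<lfloor>x\<rfloor> + frac x" by (simp add: frac_def)
  show ?thesis
  proof (cases "w \<in> grid t")
    case False
    have "{x\<in>Xs t h. frac x = w} = {}"
      using False frac_in_grid by (auto simp: Xs_def)
    then show ?thesis using S False by simp
  next
    case True
    then have w: "0 \<le> w" "w < 1" "w * real t \<in> \<int>" by (auto simp: grid_def)
    have memX: "of_int m + w \<in> Xs t h" if "h < of_int m + w" "of_int m + w < h + 1" for m
    proof -
      have "(of_int m + w) * real t = of_int m * real t + w * real t" by (simp add: algebra_simps)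
      also have "\<dots> \<in> \<int>" using w by (metis Ints_add Ints_mult Ints_of_int Ints_of_nat)
      finally show ?thesis using that by (simp add: Xs_def)
    qed
    consider "v < w" | "v = w" | "w < v" by linarith
    then show ?thesis
    proof cases
      case 1
      have "{x\<in>Xs t h. frac x = w} = {of_int k0 + w}"
      proof (intro equalityI subsetI)
        fix x assume "x \<in> {x\<in>Xs t h. frac x = w}"
        then have x: "h < x" "x < h + 1" "frac x = w" by (auto simp: Xs_def)
        have "(-1::real) < of_int (\<lfloor>x\<rfloor> - k0)" "of_int (\<lfloor>x\<rfloor> - k0) < (1::real)"
          using x hk xr[of x] 1 v0 w by auto
        then have "\<lfloor>x\<rfloor> = k0" using int_between0 by fastforce
        then show "x \<in> {of_int k0 + w}" using xr[of x] x by simp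
      next
        fix x assume "x \<in> {of_int k0 + w}"
        then show "x \<in> {x\<in>Xs t h. frac x = w}"
          using memX[of k0] hk 1 v0 w floor_frac_add[OF w(1,2)] by auto
      qed
      then show ?thesis using S True 1 floor_frac_add[OF w(1,2)]
        by (simp add: kap_def v_def k0_def)
    next
      case 2
      have "{x\<in>Xs t h. frac x = w} = {}"
      proof (intro equalityI subsetI)
        fix x assume "x \<in> {x\<in>Xs t h. frac x = w}"
        then have x: "h < x" "x < h + 1" "frac x = w" by (auto simp: Xs_def)
        have "(0::real) < of_int (\<lfloor>x\<rfloor> - k0)" "of_int (\<lfloor>x\<rfloor> - k0) < (1::real)"
          using x hk xr[of x] 2 v0 w by auto
        then show "x \<in> {}" by (metis of_int_less_iff of_int_0 of_int_1 zless_imp_add1_zle not_le add_0)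
      qed simp
      then show ?thesis using S True 2 by (simp add: kap_def v_def)
    next
      case 3
      have "{x\<in>Xs t h. frac x = w} = {of_int (k0 + 1) + w}"
      proof (intro equalityI subsetI)
        fix x assume "x \<in> {x\<in>Xs t h. frac x = w}"
        then have x: "h < x" "x < h + 1" "frac x = w" by (auto simp: Xs_def)
        have "(-1::real) < of_int (\<lfloor>x\<rfloor> - (k0 + 1))" "of_int (\<lfloor>x\<rfloor> - (k0 + 1)) < (1::real)"
          using x hk xr[of x] 3 v0 w by auto
        then have "\<lfloor>x\<rfloor> = k0 + 1" using int_between0 by fastforce
        then show "x \<in> {of_int (k0 + 1) + w}" using xr[of x] x by simp
      next
        fix x assume "x \<in> {of_int (k0 + 1) + w}"
        then have x: "x = of_int (k0 + 1) + w" by simp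
        have fx: "frac x = w" using x floor_frac_add(2)[OF w(1,2), of "k0 + 1"] by simp
        have "x \<in> Xs t h" using memX[of "k0 + 1"] x hk 3 v0 w by auto
        then show "x \<in> {x\<in>Xs t h. frac x = w}" using fx by simp
      qed
      moreover have "nat (k0 + 1) = Suc (nat k0)" using k0 by simp
      ultimately show ?thesis using S True 3 floor_frac_add[OF w(1,2), of "k0 + 1"]
        by (simp add: kap_def v_def k0_def zX_monom)
    qed
  qed
qed

definition Rp :: "(nat \<Rightarrow> nat) \<Rightarrow> nat \<Rightarrow> real \<Rightarrow> real poly" where
  "Rp sv k w = (\<Sum>C\<in>Sset sv k. if frac (lastv k C) = w then monom 1 (nat \<lfloor>lastv k C\<rfloor>) else 0)"

lemma finite_pgrid:
  assumes pos: "\<forall>j. 0 < sv j"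
  shows "finite (pgrid sv k)"
  using finite_grid pos by (simp add: pgrid_def)

lemma Rp_Ap:
  assumes pos: "\<forall>j. 0 < sv j"
  shows "Rp sv k w = Ap sv k w"
proof (induction k arbitrary: w)
  case 0
  show ?case by (simp add: Rp_def Sset_0 lastv_def)
next
  case (Suc k)
  have finS: "finite (Sset sv k)" using finite_Sset[OF pos] .
  have "Rp sv (Suc k) w = (\<Sum>D\<in>Sset sv (Suc k). if frac (D k) = w then monom 1 (nat \<lfloor>D k\<rfloor>) else 0)"
  proof -
    have l: "\<And>C. lastv (Suc k) C = C k" by (simp add: lastv_def)
    show ?thesis unfolding Rp_def l ..
  qed
  also have "\<dots> = (\<Sum>(C, x)\<in>(SIGMA C:Sset sv k. Xs (sv k) (lastv k C)).
                     if frac x = w then monom 1 (nat \<lfloor>x\<rfloor>) else 0)"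
    unfolding Sset_Suc by (subst sum.reindex[OF inj_upd]) (rule sum.cong[OF refl], auto split: prod.splits)
  also have "\<dots> = (\<Sum>C\<in>Sset sv k. \<Sum>x\<in>Xs (sv k) (lastv k C).
                     if frac x = w then monom 1 (nat \<lfloor>x\<rfloor>) else 0)"
    by (rule sum.Sigma[symmetric]) (use finS finite_Xs pos in auto)
  also have "\<dots> = (\<Sum>C\<in>Sset sv k. if w \<in> grid (sv k)
                     then kap (frac (lastv k C)) w * monom 1 (nat \<lfloor>lastv k C\<rfloor>) else 0)"
    by (rule sum.cong[OF refl]) (rule inner[OF pos[rule_format] Sset_lastv_nonneg])
  also have "\<dots> = Ap sv (Suc k) w"
  proof (cases "w \<in> grid (sv k)")
    case False then show ?thesis by simp
  next
    case True
    have "Ap sv (Suc k) w = (\<Sum>v\<in>pgrid sv k. kap v w * Rp sv k v)"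
      using True Suc.IH by simp
    also have "\<dots> = (\<Sum>v\<in>pgrid sv k. \<Sum>C\<in>Sset sv k.
          if frac (lastv k C) = v then kap (frac (lastv k C)) w * monom 1 (nat \<lfloor>lastv k C\<rfloor>) else 0)"
      unfolding Rp_def sum_distrib_left by (intro sum.cong refl) auto
    also have "\<dots> = (\<Sum>C\<in>Sset sv k. \<Sum>v\<in>pgrid sv k.
          if frac (lastv k C) = v then kap (frac (lastv k C)) w * monom 1 (nat \<lfloor>lastv k C\<rfloor>) else 0)"
      by (rule sum.swap)
    also have "\<dots> = (\<Sum>C\<in>Sset sv k. kap (frac (lastv k C)) w * monom 1 (nat \<lfloor>lastv k C\<rfloor>))"
      by (intro sum.cong refl) (simp add: finite_pgrid[OF pos] Sset_frac_pgrid)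
    finally show ?thesis using True by simp
  qed
  finally show ?case .
qed


definition svf :: "nat list \<Rightarrow> nat \<Rightarrow> nat" where
  "svf s j = (if j < length s then s ! j else 1)"

lemma svf_pos:
  assumes "\<forall>x\<in>set s. 0 < x"
  shows "\<forall>j. 0 < svf s j"
  using assms by (auto simp: svf_def)

lemma lift_vertex:
  assumes "i \<le> length s"
  shows "lift (length s) (Ps_vertex s i) j = (if j \<le> length s \<and> i \<le> j then real (svf s j) else 0)"
  using assms by (auto simp: lift_def Ps_vertex_def svf_def)

lemma comb_eq:
  "(\<Sum>i\<le>length s. c i * lift (length s) (Ps_vertex s i) j)
     = (if j \<le> length s then real (svf s j) * (\<Sum>i\<le>j. c i) else 0)"
proof -
  let ?n = "length s"
  have "(\<Sum>i\<le>?n. c i * lift ?n (Ps_vertex s i) j)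
      = (\<Sum>i\<le>?n. if j \<le> ?n \<and> i \<le> j then c i * real (svf s j) else 0)"
    by (intro sum.cong refl) (simp add: lift_vertex)
  also have "\<dots> = (if j \<le> ?n then real (svf s j) * (\<Sum>i\<le>j. c i) else 0)"
  proof (cases "j \<le> ?n")
    case True
    have "(\<Sum>i\<le>?n. if j \<le> ?n \<and> i \<le> j then c i * real (svf s j) else 0)
        = (\<Sum>i\<le>?n. if i \<le> j then c i * real (svf s j) else 0)"
      using True by simp
    also have "\<dots> = (\<Sum>i\<in>{i\<in>{..?n}. i \<le> j}. c i * real (svf s j))"
      by (rule sum.inter_filter[symmetric]) simp
    also have "{i\<in>{..?n}. i \<le> j} = {..j}" using True by auto
    finally show ?thesis using True by (simp add: sum_distrib_right mult.commute)
  qed simp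
  finally show ?thesis .
qed

lemma telescope: "(\<Sum>i\<le>j. C i - lastv i C) = C j"
  by (induction j) (auto simp: lastv_def)

lemma Y_eq:
  "open_parallelepiped (length s) (length s) (Ps_vertex s) \<inter> lattice_pts (length s)
     = (\<lambda>C j. real (svf s j) * C j) ` Sset (svf s) (Suc (length s))"
proof
  let ?n = "length s"
  show "open_parallelepiped ?n ?n (Ps_vertex s) \<inter> lattice_pts ?n
     \<subseteq> (\<lambda>C j. real (svf s j) * C j) ` Sset (svf s) (Suc ?n)"
  proof
    fix y assume yin: "y \<in> open_parallelepiped ?n ?n (Ps_vertex s) \<inter> lattice_pts ?n"
    then obtain c where c: "\<forall>i\<le>?n. 0 < c i \<and> c i < 1"
      and y: "y = (\<lambda>j. \<Sum>i\<le>?n. c i * lift ?n (Ps_vertex s i) j)"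
      by (auto simp: open_parallelepiped_def)
    have yl: "\<forall>j\<le>?n. y j \<in> \<int>" using yin by (auto simp: lattice_pts_def)
    have yj: "y j = (if j \<le> ?n then real (svf s j) * (\<Sum>i\<le>j. c i) else 0)" for j
      unfolding y comb_eq ..
    define C where "C j = (if j \<le> ?n then (\<Sum>i\<le>j. c i) else 0)" for j
    have yC: "y = (\<lambda>j. real (svf s j) * C j)"
      by (rule ext) (simp add: yj C_def)
    have dC: "C j - lastv j C = c j" if "j \<le> ?n" for j
    proof (cases j)
      case 0 then show ?thesis using that by (simp add: C_def lastv_def)
    next
      case (Suc j') then show ?thesis using that by (simp add: C_def lastv_def)
    qed
    have "C \<in> Sset (svf s) (Suc ?n)"
      unfolding Sset_def
    proof (intro CollectI conjI allI impI)
      fix j assume j: "j < Suc ?n"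
      then have "y j \<in> \<int>" using yl by simp
      then show "C j * real (svf s j) \<in> \<int>" using yC by (simp add: mult.commute)
      have jn: "j \<le> ?n" using j by simp
      have "0 < c j" "c j < 1" using c jn by auto
      then show "lastv j C < C j" "C j < lastv j C + 1" using dC[OF jn] by auto
    next
      fix j assume "Suc ?n \<le> j" then show "C j = 0" by (simp add: C_def)
    qed
    then show "y \<in> (\<lambda>C j. real (svf s j) * C j) ` Sset (svf s) (Suc ?n)"
      using yC by blast
  qed
  show "(\<lambda>C j. real (svf s j) * C j) ` Sset (svf s) (Suc ?n)
     \<subseteq> open_parallelepiped ?n ?n (Ps_vertex s) \<inter> lattice_pts ?n"
  proof clarify
    fix C assume C: "C \<in> Sset (svf s) (Suc ?n)"
    define c where "c i = C i - lastv i C" for i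
    have c: "\<forall>i\<le>?n. 0 < c i \<and> c i < 1"
    proof (intro allI impI)
      fix i assume "i \<le> ?n"
      then have "i < Suc ?n" by simp
      then have "lastv i C < C i \<and> C i < lastv i C + 1" using C by (auto simp: Sset_def)
      then show "0 < c i \<and> c i < 1" by (simp add: c_def)
    qed
    have eq: "(\<lambda>j. real (svf s j) * C j) = (\<lambda>j. \<Sum>i\<le>?n. c i * lift ?n (Ps_vertex s i) j)"
    proof
      fix j
      show "real (svf s j) * C j = (\<Sum>i\<le>?n. c i * lift ?n (Ps_vertex s i) j)"
        unfolding comb_eq c_def telescope using C by (auto simp: Sset_def)
    qed
    have "(\<lambda>j. real (svf s j) * C j) \<in> open_parallelepiped ?n ?n (Ps_vertex s)"
      unfolding open_parallelepiped_def eq using c by blast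
    moreover have "(\<lambda>j. real (svf s j) * C j) \<in> lattice_pts ?n"
      unfolding lattice_pts_def
    proof (intro CollectI conjI allI impI)
      fix j assume "j \<le> ?n"
      then have "C j * real (svf s j) \<in> \<int>" using C by (auto simp: Sset_def)
      then show "real (svf s j) * C j \<in> \<int>" by (simp add: mult.commute)
    next
      fix j assume "?n < j" then show "real (svf s j) * C j = 0" using C by (auto simp: Sset_def)
    qed
    ultimately show "(\<lambda>j. real (svf s j) * C j) \<in> open_parallelepiped ?n ?n (Ps_vertex s) \<inter> lattice_pts ?n"
      by blast
  qed
qed

lemma deriv_eq_Rp:
  assumes pos: "\<forall>x\<in>set s. 0 < x"
  shows "s_derangement s = Rp (svf s) (Suc (length s)) 0"
proof -
  let ?n = "length s"
  have sp: "\<forall>j. 0 < svf s j" using svf_pos[OF pos] .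
  have inj: "inj_on (\<lambda>C j. real (svf s j) * C j) (Sset (svf s) (Suc ?n))"
  proof (rule inj_onI)
    fix C D assume "(\<lambda>j. real (svf s j) * C j) = (\<lambda>j. real (svf s j) * D j)"
    then have "\<And>j. real (svf s j) * C j = real (svf s j) * D j" by meson
    then show "C = D" using sp by (intro ext) (metis mult_cancel_left of_nat_0_less_iff less_irrefl)
  qed
  have sn: "svf s ?n = 1" by (simp add: svf_def)
  have "s_derangement s = (\<Sum>y\<in>open_parallelepiped ?n ?n (Ps_vertex s) \<inter> lattice_pts ?n.
                               monom 1 (nat \<lfloor>y ?n\<rfloor>))"
    by (simp add: s_derangement_def ell_star_def)
  also have "\<dots> = (\<Sum>C\<in>Sset (svf s) (Suc ?n). monom 1 (nat \<lfloor>C ?n\<rfloor>))"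
    unfolding Y_eq by (subst sum.reindex[OF inj]) (simp add: sn)
  also have "\<dots> = Rp (svf s) (Suc ?n) 0"
    unfolding Rp_def
  proof (intro sum.cong refl)
    fix C assume C: "C \<in> Sset (svf s) (Suc ?n)"
    then have "C ?n * real (svf s ?n) \<in> \<int>" by (auto simp: Sset_def)
    then have "C ?n \<in> \<int>" using sn by simp
    then have "frac (C ?n) = 0" by (simp add: frac_eq_0_iff)
    then show "monom 1 (nat \<lfloor>C ?n\<rfloor>) =
      (if frac (lastv (Suc ?n) C) = 0 then monom 1 (nat \<lfloor>lastv (Suc ?n) C\<rfloor>) else 0)"
      by (simp add: lastv_def)
  qed
  finally show ?thesis .
qed

theorem corollary5p3:
  fixes s :: "nat list"
  assumes "s \<noteq> []" and "\<forall>x\<in>set s. 0 < x"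
  shows "gamma_nonneg (length s + 1) (s_derangement s)"
proof -
  have sp: "\<forall>j. 0 < svf s j" using svf_pos[OF assms(2)] .
  have "s_derangement s = Ap (svf s) (Suc (length s)) 0"
    using deriv_eq_Rp[OF assms(2)] Rp_Ap[OF sp] by simp
  then show ?thesis using Ap_gamma[OF sp, of "Suc (length s)"] by simp
qed

end
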